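(* Let $n\ge 1$ and let $x:\mathbb{N}\to\mathbb{R}$ satisfy $x(t+n)=a_1x(t+n-1)+\dots+a_nx(t)$ for all $t\in\mathbb{N}$, with $a_1,\dots,a_n\in\mathbb{R}$, and assume $x$ satisfies no linear difference equation $x(t+m)=c_1x(t+m-1)+\dots+c_mx(t)$ ($\forall t$) of order $m<n$. Let $X\in\mathbb{R}(z)$ be the rational function whose expansion at infinity is $\sum_{t\ge0}x(t)z^{-(t+1)}$. Then $a_1,\dots,a_n$ are linearly identifiable without determining the initial conditions: the $(n+1)\times(n+1)$ matrix $\mathcal{N}$ whose $\mu$-th row ($0\le\mu\le n$) is $$\Big(\tfrac{d^{n+\mu}}{dz^{n+\mu}}(z^nX),\ \tfrac{d^{n+\mu}}{dz^{n+\mu}}(z^{n-1}X),\ \dots,\ \tfrac{d^{n+\mu}}{dz^{n+\mu}}X\Big)$$ has rank $n$, and $(\alpha_1,\dots,\alpha_n)=(a_1,\dots,a_n)$ is the unique solution in $\mathbb{R}(z)^n$ of the linear system $$\frac{d^{n+\mu}}{dz^{n+\mu}}(z^nX)=\sum_{i=1}^n\alpha_i\,\frac{d^{n+\mu}}{dz^{n+\mu}}(z^{n-i}X),\qquad \mu=0,1,\dots,n.$$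
   Context: $\mathbb{R}(z)$ is the field of real rational functions with derivation $d/dz$. Here $Q(z)X(z)$, with $Q(z)=z^n-a_1z^{n-1}-\dots-a_n$, is a polynomial of degree at most $n-1$ encoding the initial conditions; derivatives of order $\ge n$ eliminate it. *)

theory Defs
  imports Complex_Main "HOL-Computational_Algebra.Polynomial"
    "HOL-Computational_Algebra.Normalized_Fraction" "HOL-Computational_Algebra.Field_as_Ring" "HOL-Computational_Algebra.Polynomial_Factorial"
    "Jordan_Normal_Form.DL_Rank"
begin

text \<open>The field of real rational functions R(z) is represented by the fraction
  field of real polynomials, type real poly fract.\<close>

definition rderiv :: "real poly fract \<Rightarrow> real poly fract" where
  "rderiv r = (case quot_of_fract r of (p, q) \<Rightarrow>
      Fract (pderiv p * q - p * pderiv q) (q * q))"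

text \<open>Evaluation of a rational function at a real point (value of p/q
  in canonical form; meaningful away from the poles).\<close>
definition reval :: "real poly fract \<Rightarrow> real \<Rightarrow> real" where
  "reval r z = (case quot_of_fract r of (p, q) \<Rightarrow> poly p z / poly q z)"

definition rpoly :: "real poly \<Rightarrow> real poly fract" where
  "rpoly p = Fract p 1"

definition rconst :: "real \<Rightarrow> real poly fract" where
  "rconst c = rpoly [:c:]"

definition rz :: "real poly fract" where
  "rz = rpoly [:0, 1:]"

end

theory Submission
  imports Defs
begin

lemma key_alg: fixes p1 q1 p q P1 Q1 P Q :: "'a::comm_ring_1" assumes "p1*q = p*q1" "P1*q + p1*Q = P*q1 + p*Q1" shows "(P1*q1 - p1*Q1)*(q*q) = (P*q - p*Q)*(q1*q1)"
proof -
  have "(P1*q1 - p1*Q1)*(q*q) - (P*q - p*Q)*(q1*q1) = q*q1*(P1*q + p1*Q - (P*q1 + p*Q1)) - (Q1*q + Q*q1)*(p1*q - p*q1)"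
    by (simp add: algebra_simps)
  also have "\<dots> = 0" using assms by simp
  finally show ?thesis by simp
qed

lemma rderiv_Fract:
  assumes q: "q \<noteq> 0"
  shows "rderiv (Fract p q) = Fract (pderiv p * q - p * pderiv q) (q * q)"
proof -
  obtain p1 q1 where pq: "quot_of_fract (Fract p q) = (p1, q1)" by (cases "quot_of_fract (Fract p q)") auto
  have q1: "q1 \<noteq> 0" using snd_quot_of_fract_nonzero[of "Fract p q"] pq by simp
  have "Fract p1 q1 = Fract p q" using Fract_quot_of_fract[of "Fract p q"] pq by simp
  hence e: "p1 * q = p * q1" using q q1 by (simp add: eq_fract)
  hence "pderiv (p1 * q) = pderiv (p * q1)" by simp
  hence d: "pderiv p1 * q + p1 * pderiv q = pderiv p * q1 + p * pderiv q1"
    by (simp add: pderiv_mult algebra_simps)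
  show ?thesis unfolding rderiv_def pq using q q1
    by (simp add: eq_fract key_alg[OF e d])
qed

lemma rep_fract: obtains p q where "q \<noteq> 0" "r = Fract p q"
  by (cases r) auto

lemma rderiv_add: "rderiv (r + s) = rderiv r + rderiv s"
proof -
  obtain p q where pq: "q \<noteq> 0" "r = Fract p q" by (rule rep_fract)
  obtain p' q' where pq': "q' \<noteq> 0" "s = Fract p' q'" by (rule rep_fract)
  show ?thesis using pq pq' by (simp add: rderiv_Fract eq_fract pderiv_mult pderiv_add algebra_simps)
qed

lemma rderiv_mult: "rderiv (r * s) = rderiv r * s + r * rderiv s"
proof -
  obtain p q where pq: "q \<noteq> 0" "r = Fract p q" by (rule rep_fract)
  obtain p' q' where pq': "q' \<noteq> 0" "s = Fract p' q'" by (rule rep_fract)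
  show ?thesis using pq pq' by (simp add: rderiv_Fract eq_fract pderiv_mult pderiv_add algebra_simps)
qed

lemma rderiv_rpoly: "rderiv (rpoly p) = rpoly (pderiv p)"
  unfolding rpoly_def by (simp add: rderiv_Fract)

lemma rpoly_add: "rpoly (p + q) = rpoly p + rpoly q" unfolding rpoly_def by simp
lemma rpoly_mult: "rpoly (p * q) = rpoly p * rpoly q" unfolding rpoly_def by simp
lemma rpoly_0: "rpoly 0 = 0" unfolding rpoly_def by (simp add: Zero_fract_def)
lemma rpoly_1: "rpoly 1 = 1" unfolding rpoly_def by (simp add: One_fract_def)
lemma rpoly_minus: "rpoly (- p) = - rpoly p" unfolding rpoly_def by simp
lemma rpoly_diff: "rpoly (p - q) = rpoly p - rpoly q" unfolding rpoly_def by simp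
lemma rpoly_sum: "rpoly (sum f A) = (\<Sum>i\<in>A. rpoly (f i))"
  by (induction A rule: infinite_finite_induct) (auto simp: rpoly_0 rpoly_add)
lemma rpoly_power: "rpoly (p ^ k) = rpoly p ^ k"
  by (induction k) (auto simp: rpoly_1 rpoly_mult)
lemma rpoly_inj: "rpoly p = rpoly q \<longleftrightarrow> p = q" unfolding rpoly_def by (simp add: eq_fract)

lemma rderiv_0: "rderiv 0 = 0" using rderiv_rpoly[of 0] by (simp add: rpoly_0)
lemma rderiv_1: "rderiv 1 = 0" using rderiv_rpoly[of 1] by (simp add: rpoly_0 rpoly_1)
lemma rderiv_rconst: "rderiv (rconst c) = 0" unfolding rconst_def by (simp add: rderiv_rpoly rpoly_0)
lemma rderiv_minus: "rderiv (- r) = - rderiv r"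
  using rderiv_add[of r "-r"] by (simp add: rderiv_0 eq_neg_iff_add_eq_0)
lemma rderiv_diff: "rderiv (r - s) = rderiv r - rderiv s"
  using rderiv_add[of r "-s"] by (simp add: rderiv_minus)
lemma rderiv_sum: "rderiv (sum f A) = (\<Sum>i\<in>A. rderiv (f i))"
  by (induction A rule: infinite_finite_induct) (auto simp: rderiv_0 rderiv_add)
lemma rderiv_cmult: "rderiv (rconst c * r) = rconst c * rderiv r"
  by (simp add: rderiv_mult rderiv_rconst)

lemma rderivs_add: "(rderiv ^^ k) (r + s) = (rderiv ^^ k) r + (rderiv ^^ k) s"
  by (induction k) (auto simp: rderiv_add)
lemma rderivs_diff: "(rderiv ^^ k) (r - s) = (rderiv ^^ k) r - (rderiv ^^ k) s"
  by (induction k) (auto simp: rderiv_diff)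
lemma rderivs_sum: "(rderiv ^^ k) (sum f A) = (\<Sum>i\<in>A. (rderiv ^^ k) (f i))"
  by (induction k) (auto simp: rderiv_sum)
lemma rderivs_cmult: "(rderiv ^^ k) (rconst c * r) = rconst c * (rderiv ^^ k) r"
  by (induction k) (auto simp: rderiv_cmult)
lemma rderivs_rpoly: "(rderiv ^^ k) (rpoly p) = rpoly ((pderiv ^^ k) p)"
  by (induction k) (auto simp: rderiv_rpoly)

lemma pderivs_zero: "degree (p::real poly) < k \<Longrightarrow> (pderiv ^^ k) p = 0"
proof (induction k arbitrary: p)
  case 0 then show ?case by simp
next
  case (Suc k)
  have "(pderiv ^^ Suc k) p = (pderiv ^^ k) (pderiv p)" by (simp add: funpow_Suc_right del: funpow.simps)
  also have "\<dots> = 0"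
  proof (cases k)
    case 0 then show ?thesis using Suc.prems by (simp add: Polynomial.pderiv_eq_0_iff)
  next
    case (Suc k') then show ?thesis using Suc.prems by (intro Suc.IH) (auto simp: degree_pderiv)
  qed
  finally show ?case .
qed

lemma rderivs_rpoly_zero: "degree p < k \<Longrightarrow> (rderiv ^^ k) (rpoly p) = 0"
  by (simp add: rderivs_rpoly pderivs_zero rpoly_0)

lemma rderiv_poly_imp_poly:
  assumes "rderiv r = rpoly R"
  shows "\<exists>p. r = rpoly p"
proof -
  obtain p q where pq: "quot_of_fract r = (p, q)" by (cases "quot_of_fract r") auto
  have q: "q \<noteq> 0" using snd_quot_of_fract_nonzero[of r] pq by simp
  have r: "r = Fract p q" using Fract_quot_of_fract[of r] pq by simp
  have cop: "coprime p q" using coprime_quot_of_fract[of r] pq by simp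
  have "Fract (pderiv p * q - p * pderiv q) (q * q) = Fract R 1" using assms r q
    by (simp add: rderiv_Fract rpoly_def)
  hence e: "pderiv p * q - p * pderiv q = R * (q * q)" using q by (simp add: eq_fract)
  hence "p * pderiv q = q * (pderiv p - R * q)" by (simp add: algebra_simps)
  hence "q dvd p * pderiv q" by simp
  hence "q dvd pderiv q" using cop by (simp add: coprime_commute coprime_dvd_mult_right_iff)
  hence "pderiv q = 0" using not_dvd_pderiv Polynomial.pderiv_eq_0_iff by metis
  hence dq: "degree q = 0" by (simp add: Polynomial.pderiv_eq_0_iff)
  then obtain c where c: "q = [:c:]" "c \<noteq> 0" using q by (metis degree_eq_zeroE pCons_0_0)
  have "r = rpoly (Polynomial.smult (1/c) p)" unfolding r rpoly_def using c by (simp add: eq_fract)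
  thus ?thesis by blast
qed

lemma rderiv_zero_const:
  assumes "rderiv r = 0" shows "\<exists>c. r = rconst c"
proof -
  have "rderiv r = rpoly 0" using assms by (simp add: rpoly_0)
  then obtain p where p: "r = rpoly p" using rderiv_poly_imp_poly by blast
  have "rpoly (pderiv p) = rpoly 0" using assms p by (simp add: rderiv_rpoly rpoly_0)
  hence "pderiv p = 0" by (simp add: rpoly_inj)
  hence "degree p = 0" by (simp add: Polynomial.pderiv_eq_0_iff)
  then obtain c where "p = [:c:]" by (metis degree_eq_zeroE)
  thus ?thesis using p by (auto simp: rconst_def)
qed

lemma rderivs_zero_poly:
  assumes "(rderiv ^^ k) r = 0" shows "\<exists>p. r = rpoly p"
  using assms
proof (induction k arbitrary: r)
  case 0 then show ?case by (auto simp: rpoly_0 intro: exI[of _ 0])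
next
  case (Suc k)
  have "(rderiv ^^ k) (rderiv r) = 0" using Suc.prems by (simp add: funpow_Suc_right del: funpow.simps)
  then obtain R where "rderiv r = rpoly R" using Suc.IH by blast
  thus ?case by (rule rderiv_poly_imp_poly)
qed

lemma rconst_mult: "rconst (a * b) = rconst a * rconst b" unfolding rconst_def rpoly_def by (simp add: mult.commute)
lemma rconst_1: "rconst 1 = 1" unfolding rconst_def using rpoly_1 by (simp add: one_pCons)
lemma rconst_0: "rconst 0 = 0" unfolding rconst_def by (simp add: rpoly_0)
lemma rconst_inj: "rconst a = rconst b \<longleftrightarrow> a = b" unfolding rconst_def by (simp add: rpoly_inj)
lemma rconst_add: "rconst (a + b) = rconst a + rconst b" unfolding rconst_def by (simp add: rpoly_add[symmetric])
lemma rconst_sum: "rconst (sum f A) = (\<Sum>i\<in>A. rconst (f i))"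
  by (induction A rule: infinite_finite_induct) (auto simp: rconst_0 rconst_add)
lemma rconst_minus: "rconst (- a) = - rconst a" unfolding rconst_def by (simp add: rpoly_minus[symmetric])

lemma wronski:
  fixes g :: "nat \<Rightarrow> real poly fract"
  assumes "\<forall>c. (\<Sum>i=1..m. rconst (c i) * g i) = 0 \<longrightarrow> (\<forall>i\<in>{1..m}. c i = 0)"
  shows "\<forall>\<beta>. (\<forall>\<mu><m. (\<Sum>i=1..m. \<beta> i * (rderiv^^\<mu>) (g i)) = 0) \<longrightarrow> (\<forall>i\<in>{1..m}. \<beta> i = 0)"
  using assms
proof (induction m)
  case 0 then show ?case by simp
next
  case (Suc m)
  have indep: "(\<forall>i\<in>{1..m}. c i = 0)" if "(\<Sum>i=1..m. rconst (c i) * g i) = 0" for c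
  proof -
    have "(\<Sum>i=1..Suc m. rconst ((c(Suc m := 0)) i) * g i) = (\<Sum>i=1..m. rconst (c i) * g i)"
      by (simp add: rconst_0)
    hence "(\<Sum>i=1..Suc m. rconst ((c(Suc m := 0)) i) * g i) = 0" using that by simp
    hence "\<forall>i\<in>{1..Suc m}. (c(Suc m := 0)) i = 0" using Suc.prems by blast
    thus ?thesis
    proof (intro ballI)
      fix i assume h: "\<forall>i\<in>{1..Suc m}. (c(Suc m := 0)) i = 0" and i: "i \<in> {1..m}"
      have "i \<in> {1..Suc m}" using i by auto
      hence "(c(Suc m := 0)) i = 0" using h by blast
      thus "c i = 0" using i by (auto split: if_splits)
    qed
  qed
  hence IH: "\<forall>\<beta>. (\<forall>\<mu><m. (\<Sum>i=1..m. \<beta> i * (rderiv^^\<mu>) (g i)) = 0) \<longrightarrow> (\<forall>i\<in>{1..m}. \<beta> i = 0)"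
    using Suc.IH by blast
  show ?case
  proof (intro allI impI)
    fix \<beta> assume rows: "\<forall>\<mu><Suc m. (\<Sum>i=1..Suc m. \<beta> i * (rderiv^^\<mu>) (g i)) = 0"
    show "\<forall>i\<in>{1..Suc m}. \<beta> i = 0"
    proof (cases "\<beta> (Suc m) = 0")
      case True
      have "\<forall>\<mu><m. (\<Sum>i=1..m. \<beta> i * (rderiv^^\<mu>) (g i)) = 0"
        using rows True by auto
      hence "\<forall>i\<in>{1..m}. \<beta> i = 0" using IH[rule_format, of \<beta>] by blast
      thus ?thesis using True by (auto simp: le_Suc_eq)
    next
      case False
      define b where "b = \<beta> (Suc m)"
      define \<gamma> where "\<gamma> i = \<beta> i / b" for i
      have g1: "\<gamma> (Suc m) = 1" using False by (simp add: \<gamma>_def b_def)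
      have grows: "(\<Sum>i=1..Suc m. \<gamma> i * (rderiv^^\<mu>) (g i)) = 0" if "\<mu> < Suc m" for \<mu>
      proof -
        have "(\<Sum>i=1..Suc m. \<gamma> i * (rderiv^^\<mu>) (g i)) = (\<Sum>i=1..Suc m. \<beta> i * (rderiv^^\<mu>) (g i)) / b"
          unfolding sum_divide_distrib by (rule sum.cong) (auto simp: \<gamma>_def)
        thus ?thesis using rows that by simp
      qed
      have drows: "(\<Sum>i=1..m. rderiv (\<gamma> i) * (rderiv^^\<mu>) (g i)) = 0" if "\<mu> < m" for \<mu>
      proof -
        have "0 = rderiv (\<Sum>i=1..Suc m. \<gamma> i * (rderiv^^\<mu>) (g i))" using grows[of \<mu>] that
          by (simp add: rderiv_0)
        also have "\<dots> = (\<Sum>i=1..Suc m. rderiv (\<gamma> i) * (rderiv^^\<mu>) (g i))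
              + (\<Sum>i=1..Suc m. \<gamma> i * (rderiv^^(Suc \<mu>)) (g i))"
          unfolding rderiv_sum rderiv_mult sum.distrib funpow.simps comp_def ..
        also have "(\<Sum>i=1..Suc m. \<gamma> i * (rderiv^^(Suc \<mu>)) (g i)) = 0"
          using grows[of "Suc \<mu>"] that by simp
        finally show ?thesis using g1 by (simp add: rderiv_1)
      qed
      have "\<forall>i\<in>{1..m}. rderiv (\<gamma> i) = 0" using IH[rule_format, of "\<lambda>i. rderiv (\<gamma> i)"] drows by blast
      hence ex: "\<exists>c. \<gamma> i = rconst c" if "i \<in> {1..m}" for i using that rderiv_zero_const by blast
      define c where "c i = (SOME c. \<gamma> i = rconst c)" for i
      have c: "\<gamma> i = rconst (c i)" if "i \<in> {1..m}" for i
        unfolding c_def using someI_ex[OF ex[OF that]] .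
      define c' where "c' = c(Suc m := 1)"
      have cg: "\<gamma> i = rconst (c' i)" if "i \<in> {1..Suc m}" for i
        using that c g1 by (auto simp: c'_def le_Suc_eq rconst_1)
      have "(\<Sum>i=1..Suc m. rconst (c' i) * g i) = (\<Sum>i=1..Suc m. \<gamma> i * (rderiv^^0) (g i))"
        by (rule sum.cong) (simp_all add: cg)
      also have "\<dots> = 0" using grows[of 0] by simp
      finally have "\<forall>i\<in>{1..Suc m}. c' i = 0" using Suc.prems[rule_format, of c'] by blast
      hence "c' (Suc m) = 0" by simp
      thus ?thesis by (simp add: c'_def)
    qed
  qed
qed

definition PP :: "real poly \<Rightarrow> (nat \<Rightarrow> real) \<Rightarrow> real poly" where
  "PP C y = (\<Sum>j\<le>degree C. Polynomial.smult (coeff C j) (\<Sum>t<j. monom (y t) (j - t - 1)))"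

definition ecomb :: "real poly \<Rightarrow> (nat \<Rightarrow> real) \<Rightarrow> nat \<Rightarrow> real" where
  "ecomb C y s = (\<Sum>j\<le>degree C. coeff C j * y (s + j))"

lemma shift_sum:
  fixes z :: real
  assumes z: "z \<noteq> 0" and S: "(\<lambda>t. y t / z ^ (t + 1)) sums S"
  shows "(\<lambda>s. y (s + j) / z ^ (s + 1)) sums (z ^ j * S - (\<Sum>t<j. y t * z ^ (j - t - 1)))"
proof -
  have "(\<lambda>s. y (s + j) / z ^ (s + j + 1)) sums (S - (\<Sum>t<j. y t / z ^ (t + 1)))"
    using sums_iff_shift[of "\<lambda>t. y t / z ^ (t + 1)" j "S - (\<Sum>t<j. y t / z ^ (t + 1))"] S by simp
  from sums_mult[OF this, of "z ^ j"]
  have "(\<lambda>s. z ^ j * (y (s + j) / z ^ (s + j + 1))) sums (z ^ j * (S - (\<Sum>t<j. y t / z ^ (t + 1))))" .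
  moreover have "z ^ j * (y (s + j) / z ^ (s + j + 1)) = y (s + j) / z ^ (s + 1)" for s
    using z by (simp add: power_add field_simps)
  moreover have "z ^ j * (S - (\<Sum>t<j. y t / z ^ (t + 1))) = z ^ j * S - (\<Sum>t<j. y t * z ^ (j - t - 1))"
  proof -
    have "z ^ j * (y t / z ^ (t + 1)) = y t * z ^ (j - t - 1)" if "t < j" for t
    proof -
      have "j = (j - t - 1) + (t + 1)" using that by simp
      hence "z ^ j = z ^ (j - t - 1) * z ^ (t + 1)" by (metis power_add)
      thus ?thesis using z by (simp add: field_simps)
    qed
    thus ?thesis by (simp add: right_diff_distrib sum_distrib_left)
  qed
  ultimately show ?thesis by simp
qed

lemma L1:
  fixes z :: real
  assumes z: "z \<noteq> 0" and S: "(\<lambda>t. y t / z ^ (t + 1)) sums S"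
  shows "(\<lambda>s. ecomb C y s / z ^ (s + 1)) sums (poly C z * S - poly (PP C y) z)"
proof -
  have "(\<lambda>s. \<Sum>j\<le>degree C. coeff C j * (y (s + j) / z ^ (s + 1))) sums
        (\<Sum>j\<le>degree C. coeff C j * (z ^ j * S - (\<Sum>t<j. y t * z ^ (j - t - 1))))"
    by (intro sums_sum sums_mult shift_sum[OF z S])
  moreover have "(\<Sum>j\<le>degree C. coeff C j * (y (s + j) / z ^ (s + 1))) = ecomb C y s / z ^ (s + 1)" for s
    by (simp add: ecomb_def sum_divide_distrib)
  moreover have "(\<Sum>j\<le>degree C. coeff C j * (z ^ j * S - (\<Sum>t<j. y t * z ^ (j - t - 1))))
      = poly C z * S - poly (PP C y) z"
    by (simp add: PP_def poly_altdef[of C] poly_sum poly_monom right_diff_distrib sum_subtractf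
        sum_distrib_left sum_distrib_right mult_ac)
  ultimately show ?thesis by simp
qed

definition Qp :: "(nat \<Rightarrow> real) \<Rightarrow> nat \<Rightarrow> real poly" where
  "Qp a n = monom 1 n - (\<Sum>i=1..n. monom (a i) (n - i))"

lemma coeff_Qp: "coeff (Qp a n) j = (if j = n then 1 else if j < n then - a (n - j) else 0)"
proof -
  have "(\<Sum>i=1..n. coeff (monom (a i) (n - i)) j) = (\<Sum>i=1..n. if i = n - j then a i else 0)"
    by (rule sum.cong) auto
  also have "\<dots> = (if j < n then a (n - j) else 0)" by (auto simp: sum.delta')
  finally show ?thesis unfolding Qp_def coeff_diff coeff_sum by auto
qed

lemma degree_Qp: "degree (Qp a n) = n"
proof (rule antisym)
  show "degree (Qp a n) \<le> n" by (rule degree_le) (auto simp: coeff_Qp)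
  show "n \<le> degree (Qp a n)" by (rule le_degree) (simp add: coeff_Qp)
qed

lemma lead_Qp: "coeff (Qp a n) n = 1" by (simp add: coeff_Qp)

lemma Qp_nz: "Qp a n \<noteq> 0" using lead_Qp[of a n] by auto

lemma ecomb_Qp: "ecomb (Qp a n) y s = y (s + n) - (\<Sum>i=1..n. a i * y (s + n - i))"
proof -
  have "ecomb (Qp a n) y s = (\<Sum>j\<le>n. coeff (Qp a n) j * y (s + j))" by (simp add: ecomb_def degree_Qp)
  also have "\<dots> = (\<Sum>j<n. coeff (Qp a n) j * y (s + j)) + y (s + n)"
    by (simp add: lessThan_Suc_atMost[symmetric] coeff_Qp)
  also have "(\<Sum>j<n. coeff (Qp a n) j * y (s + j)) = - (\<Sum>j<n. a (n - j) * y (s + j))"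
    by (simp add: coeff_Qp sum_negf[symmetric])
  also have "(\<Sum>j<n. a (n - j) * y (s + j)) = (\<Sum>i=1..n. a i * y (s + n - i))"
    by (rule sum.reindex_bij_witness[of _ "\<lambda>i. n - i" "\<lambda>j. n - j"]) auto
  finally show ?thesis by simp
qed

lemma coeff_PP: "coeff (PP C y) d = (\<Sum>j\<le>degree C. coeff C j * (\<Sum>t<j. if j - t - 1 = d then y t else 0))"
  by (simp add: PP_def coeff_sum)

lemma PP_high: "degree C \<le> d \<Longrightarrow> coeff (PP C y) d = 0"
  unfolding coeff_PP by (intro sum.neutral ballI) (auto intro!: sum.neutral)

lemma degree_PP_less: "0 < degree C \<Longrightarrow> degree (PP C y) < degree C"
proof -
  assume "0 < degree C"
  have "degree (PP C y) \<le> degree C - 1" by (rule degree_le) (auto intro!: PP_high)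
  thus ?thesis using \<open>0 < degree C\<close> by linarith
qed

lemma coeff_PP_top:
  assumes "0 < degree C" shows "coeff (PP C y) (degree C - 1) = coeff C (degree C) * y 0"
proof -
  let ?D = "degree C"
  have inner: "(\<Sum>t<j. if j - t - 1 = ?D - 1 then y t else 0) = (if j = ?D then y 0 else 0)" if "j \<le> ?D" for j
  proof (cases "j = ?D")
    case True
    have "(\<Sum>t<j. if j - t - 1 = ?D - 1 then y t else 0) = (\<Sum>t<j. if t = 0 then y t else 0)"
      by (rule sum.cong) (use True assms in auto)
    also have "\<dots> = y 0" using True assms by (simp add: sum.delta')
    finally show ?thesis using True by simp
  next
    case False
    hence "j < ?D" using that by simp
    thus ?thesis by (intro trans[OF sum.neutral]) auto
  qed
  have "coeff (PP C y) (?D - 1) = (\<Sum>j\<le>?D. coeff C j * (if j = ?D then y 0 else 0))"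
    unfolding coeff_PP
  proof (rule sum.cong[OF refl])
    fix j assume "j \<in> {..?D}"
    thus "coeff C j * (\<Sum>t<j. if j - t - 1 = ?D - 1 then y t else 0) = coeff C j * (if j = ?D then y 0 else 0)"
      using inner[of j] by simp
  qed
  also have "\<dots> = coeff C ?D * y 0" by (simp add: if_distrib sum.delta' cong: if_cong)
  finally show ?thesis .
qed

lemma poly_zero_inf: "infinite Z \<Longrightarrow> \<forall>z\<in>Z. poly P z = 0 \<Longrightarrow> (P::real poly) = 0"
proof (rule ccontr)
  assume "infinite Z" "\<forall>z\<in>Z. poly P z = 0" "P \<noteq> 0"
  hence "finite {x. poly P x = 0}" by (simp add: poly_roots_finite)
  moreover have "Z \<subseteq> {x. poly P x = 0}" using \<open>\<forall>z\<in>Z. poly P z = 0\<close> by auto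
  ultimately show False using \<open>infinite Z\<close> finite_subset by blast
qed

lemma ecomb_shift: "ecomb C (\<lambda>s. y (s + k)) s = ecomb C y (s + k)"
  by (simp add: ecomb_def add_ac)

lemma G_all:
  assumes Z: "infinite Z" "\<forall>z\<in>Z. z \<noteq> (0::real)" and n: "n \<ge> 1"
    and rec: "\<forall>s. ecomb (Qp a n) y s = 0"
    and s0: "\<forall>z\<in>Z. (\<lambda>t. y t / z ^ (t + 1)) sums 0"
  shows "y k = 0"
proof (induction k rule: less_induct)
  case (less k)
  define y' where "y' s = y (s + k)" for s
  have s': "(\<lambda>t. y' t / z ^ (t + 1)) sums 0" if "z \<in> Z" for z
    using shift_sum[of z y 0 k] Z s0 that less.IH by (simp add: y'_def)
  have rec': "ecomb (Qp a n) y' s = 0" for s unfolding y'_def ecomb_shift using rec by simp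
  have "poly (PP (Qp a n) y') z = 0" if "z \<in> Z" for z
  proof -
    have "(\<lambda>s. ecomb (Qp a n) y' s / z ^ (s + 1)) sums (poly (Qp a n) z * 0 - poly (PP (Qp a n) y') z)"
      by (rule L1) (use Z that s' in auto)
    hence "(\<lambda>s. 0) sums (- poly (PP (Qp a n) y') z)" using rec' by simp
    thus ?thesis using sums_unique2[OF _ sums_zero] by fastforce
  qed
  hence "PP (Qp a n) y' = 0" using poly_zero_inf Z by blast
  hence "coeff (PP (Qp a n) y') (n - 1) = 0" by simp
  thus ?case using coeff_PP_top[of "Qp a n" y'] n by (simp add: degree_Qp lead_Qp y'_def)
qed

lemma rz_pow: "rz ^ k = rpoly (monom 1 k)"
  unfolding rz_def rpoly_power[symmetric] by (simp add: monom_altdef)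

lemma rconst_rz_pow: "rconst c * rz ^ k = rpoly (monom c k)"
  unfolding rz_pow rconst_def rpoly_mult[symmetric] by (simp add: monom_altdef)

lemma inf_Z:
  assumes "\<exists>R. \<forall>z::real. R < \<bar>z\<bar> \<longrightarrow> (\<lambda>t. x t / z ^ (t + 1)) sums reval X z"
  shows "\<exists>Z. infinite Z \<and> (\<forall>z\<in>Z. z \<noteq> 0 \<and> poly (Qp a n) z \<noteq> 0 \<and>
      (\<lambda>t. x t / z ^ (t + 1)) sums reval X z)"
proof -
  obtain R where R: "\<forall>z::real. R < \<bar>z\<bar> \<longrightarrow> (\<lambda>t. x t / z ^ (t + 1)) sums reval X z" using assms by blast
  define R0 where "R0 = max R 0"
  define Z where "Z = {R0<..<R0+1} - {z. poly (Qp a n) z = 0}"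
  have "infinite Z" unfolding Z_def
    by (rule Diff_infinite_finite) (auto simp: poly_roots_finite Qp_nz)
  moreover have "\<forall>z\<in>Z. z \<noteq> 0 \<and> poly (Qp a n) z \<noteq> 0 \<and> (\<lambda>t. x t / z ^ (t + 1)) sums reval X z"
  proof
    fix z assume "z \<in> Z"
    hence "R0 < z" "poly (Qp a n) z \<noteq> 0" by (auto simp: Z_def)
    moreover have "R < \<bar>z\<bar>" using \<open>R0 < z\<close> by (simp add: R0_def)
    ultimately show "z \<noteq> 0 \<and> poly (Qp a n) z \<noteq> 0 \<and> (\<lambda>t. x t / z ^ (t + 1)) sums reval X z"
      using R by (auto simp: R0_def)
  qed
  ultimately show ?thesis by blast
qed

context
  fixes n :: nat and x :: "nat \<Rightarrow> real" and a :: "nat \<Rightarrow> real"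
    and X :: "real poly fract" and Z :: "real set"
  assumes n_pos: "n \<ge> 1"
    and recur: "\<forall>t. x (t + n) = (\<Sum>i=1..n. a i * x (t + n - i))"
    and minimal: "\<forall>m<n. \<not> (\<exists>c :: nat \<Rightarrow> real.
                       \<forall>t. x (t + m) = (\<Sum>i=1..m. c i * x (t + m - i)))"
    and Zinf: "infinite Z"
    and Zprop: "\<forall>z\<in>Z. z \<noteq> 0 \<and> poly (Qp a n) z \<noteq> 0 \<and> (\<lambda>t. x t / z ^ (t + 1)) sums reval X z"
begin

lemma rec_x: "ecomb (Qp a n) x s = 0"
  using recur by (simp add: ecomb_Qp)

lemma QX: "z \<in> Z \<Longrightarrow> poly (Qp a n) z * reval X z = poly (PP (Qp a n) x) z"
proof -
  assume z: "z \<in> Z"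
  have "(\<lambda>s. ecomb (Qp a n) x s / z ^ (s + 1)) sums (poly (Qp a n) z * reval X z - poly (PP (Qp a n) x) z)"
    by (rule L1) (use Zprop z in auto)
  hence "(\<lambda>s. 0) sums (poly (Qp a n) z * reval X z - poly (PP (Qp a n) x) z)" by (simp add: rec_x)
  thus ?thesis using sums_unique2[OF _ sums_zero] by fastforce
qed

lemma X_eq: "X = Fract (PP (Qp a n) x) (Qp a n)"
proof -
  obtain p q where pq: "quot_of_fract X = (p, q)" by (cases "quot_of_fract X") auto
  have q: "q \<noteq> 0" using snd_quot_of_fract_nonzero[of X] pq by simp
  have X: "X = Fract p q" using Fract_quot_of_fract[of X] pq by simp
  let ?Z = "Z - {z. poly q z = 0}"
  have "infinite ?Z" using Zinf by (rule Diff_infinite_finite[rotated]) (simp add: poly_roots_finite q)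
  moreover have "\<forall>z\<in>?Z. poly (Qp a n * p - PP (Qp a n) x * q) z = 0"
  proof
    fix z assume z: "z \<in> ?Z"
    hence "poly (Qp a n) z * (poly p z / poly q z) = poly (PP (Qp a n) x) z"
      using QX[of z] by (simp add: reval_def pq)
    thus "poly (Qp a n * p - PP (Qp a n) x * q) z = 0" using z by (simp add: field_simps)
  qed
  ultimately have "Qp a n * p - PP (Qp a n) x * q = 0" by (rule poly_zero_inf)
  hence "p * Qp a n = PP (Qp a n) x * q" by (simp add: algebra_simps)
  thus ?thesis unfolding X using q Qp_nz by (simp add: eq_fract)
qed

lemma QX_rpoly: "rpoly (Qp a n) * X = rpoly (PP (Qp a n) x)"
  unfolding X_eq rpoly_def using Qp_nz by (simp add: eq_fract)


lemma indep_poly: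
  assumes CR: "rpoly C * X = rpoly R" and dC: "degree C < n"
  shows "C = 0"
proof (rule ccontr)
  assume Cnz: "C \<noteq> 0"
  define Q where "Q = Qp a n"
  define Pp where "Pp = PP Q x"
  define e where "e = ecomb C x"
  define T where "T = R - PP C x"
  have CP: "C * Pp = R * Q"
    using CR Qp_nz unfolding X_eq rpoly_def Q_def Pp_def by (simp add: eq_fract)
  have esum: "(\<lambda>t. e t / z ^ (t + 1)) sums poly T z" if z: "z \<in> Z" for z
  proof -
    have zz: "z \<noteq> 0" "poly Q z \<noteq> 0" using Zprop z by (auto simp: Q_def)
    have "poly Q z * (poly C z * reval X z) = poly C z * poly Pp z"
      using QX[OF z] by (simp add: Q_def Pp_def)
    also have "\<dots> = poly R z * poly Q z" using arg_cong[OF CP, of "\<lambda>p. poly p z"] by simp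
    finally have "poly C z * reval X z = poly R z" using zz by (simp add: mult.commute)
    moreover have "(\<lambda>s. ecomb C x s / z ^ (s + 1)) sums (poly C z * reval X z - poly (PP C x) z)"
      by (rule L1) (use Zprop z in auto)
    ultimately show ?thesis by (simp add: e_def T_def)
  qed
  have rec_e: "ecomb Q e s = 0" for s
  proof -
    have "ecomb Q e s = (\<Sum>j\<le>degree Q. \<Sum>k\<le>degree C. coeff Q j * (coeff C k * x (s + j + k)))"
      by (simp add: ecomb_def e_def sum_distrib_left add_ac)
    also have "\<dots> = (\<Sum>k\<le>degree C. coeff C k * (\<Sum>j\<le>degree Q. coeff Q j * x (s + k + j)))"
      by (subst sum.swap) (simp add: sum_distrib_left mult_ac add_ac)
    also have "\<dots> = (\<Sum>k\<le>degree C. coeff C k * ecomb Q x (s + k))" by (simp add: ecomb_def)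
    also have "\<dots> = 0" by (simp add: Q_def rec_x)
    finally show ?thesis .
  qed
  have "\<forall>z\<in>Z. poly (Q * T - PP Q e) z = 0"
  proof
    fix z assume z: "z \<in> Z"
    have "(\<lambda>s. ecomb Q e s / z ^ (s + 1)) sums (poly Q z * poly T z - poly (PP Q e) z)"
      by (rule L1) (use Zprop z esum in auto)
    hence "(\<lambda>s. 0) sums (poly Q z * poly T z - poly (PP Q e) z)" by (simp add: rec_e)
    thus "poly (Q * T - PP Q e) z = 0" using sums_unique2[OF _ sums_zero] by fastforce
  qed
  hence "Q * T - PP Q e = 0" by (rule poly_zero_inf[OF Zinf])
  hence QT: "Q * T = PP Q e" by simp
  have "T = 0"
  proof (rule ccontr)
    assume "T \<noteq> 0"
    hence "degree (Q * T) \<ge> n" using Qp_nz by (simp add: degree_mult_eq Q_def degree_Qp)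
    moreover have "degree (PP Q e) < n" using degree_PP_less[of Q e] n_pos by (simp add: Q_def degree_Qp)
    ultimately show False using QT by simp
  qed
  hence e0: "e k = 0" for k
    by (intro G_all[of Z n a e k]) (use Zinf Zprop n_pos rec_e esum in \<open>auto simp: Q_def\<close>)
  define m where "m = degree C"
  define lc where "lc = coeff C m"
  have lc: "lc \<noteq> 0" using Cnz by (simp add: lc_def m_def)
  define c where "c i = - coeff C (m - i) / lc" for i
  have "x (t + m) = (\<Sum>i=1..m. c i * x (t + m - i))" for t
  proof -
    have "0 = e t" using e0 by simp
    also have "\<dots> = (\<Sum>j<m. coeff C j * x (t + j)) + lc * x (t + m)"
      by (simp add: e_def ecomb_def lc_def m_def lessThan_Suc_atMost[symmetric])
    finally have "x (t + m) = - (\<Sum>j<m. coeff C j * x (t + j)) / lc" using lc by (simp add: field_simps)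
    also have "\<dots> = (\<Sum>j<m. - coeff C j / lc * x (t + j))"
      by (simp add: sum_divide_distrib sum_negf[symmetric])
    also have "\<dots> = (\<Sum>i=1..m. c i * x (t + m - i))"
      by (rule sum.reindex_bij_witness[of _ "\<lambda>i. m - i" "\<lambda>j. m - j"]) (auto simp: c_def)
    finally show ?thesis .
  qed
  moreover have "m < n" using dC by (simp add: m_def)
  ultimately show False using minimal by blast
qed

lemma indep: "\<forall>c. (\<Sum>i=1..n. rconst (c i) * (rderiv^^n) (rz^(n-i) * X)) = 0 \<longrightarrow> (\<forall>i\<in>{1..n}. c i = 0)"
proof (intro allI impI)
  fix c assume h: "(\<Sum>i=1..n. rconst (c i) * (rderiv^^n) (rz^(n-i) * X)) = 0"
  define C where "C = (\<Sum>i=1..n. monom (c i) (n - i))"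
  have "(\<Sum>i=1..n. rconst (c i) * (rderiv^^n) (rz^(n-i) * X)) = (rderiv^^n) (rpoly C * X)"
    unfolding C_def rpoly_sum sum_distrib_right rderivs_sum
    by (rule sum.cong) (simp_all add: rconst_rz_pow[symmetric] rderivs_cmult mult.assoc)
  hence "(rderiv^^n) (rpoly C * X) = 0" using h by simp
  then obtain R where "rpoly C * X = rpoly R" using rderivs_zero_poly by blast
  moreover have "degree C < n"
  proof -
    have "degree C \<le> n - 1" unfolding C_def
      by (rule degree_sum_le) (auto intro: order.trans[OF degree_monom_le])
    thus ?thesis using n_pos by linarith
  qed
  ultimately have C0: "C = 0" by (rule indep_poly)
  show "\<forall>i\<in>{1..n}. c i = 0"
  proof
    fix i assume i: "i \<in> {1..n}"
    have "coeff C (n - i) = (\<Sum>j=1..n. if j = i then c j else 0)"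
      unfolding C_def coeff_sum by (rule sum.cong) (use i in auto)
    also have "\<dots> = c i" using i by (simp add: sum.delta')
    finally show "c i = 0" using C0 by simp
  qed
qed

lemma relA:
  assumes "n \<le> k"
  shows "(rderiv^^k) (rz^n * X) = (\<Sum>i=1..n. rconst (a i) * (rderiv^^k) (rz^(n-i) * X))"
proof -
  have "rz^n * X - (\<Sum>i=1..n. rconst (a i) * (rz^(n-i) * X)) = rpoly (Qp a n) * X"
    unfolding Qp_def rpoly_diff rpoly_sum rconst_rz_pow[symmetric] rz_pow[symmetric]
    by (simp add: algebra_simps sum_distrib_right sum_distrib_left rconst_1)
  also have "\<dots> = rpoly (PP (Qp a n) x)" by (rule QX_rpoly)
  finally have "(rderiv^^k) (rz^n * X - (\<Sum>i=1..n. rconst (a i) * (rz^(n-i) * X)))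
      = (rderiv^^k) (rpoly (PP (Qp a n) x))" by simp
  hence "(rderiv^^k) (rz^n * X) - (\<Sum>i=1..n. rconst (a i) * (rderiv^^k) (rz^(n-i) * X))
      = (rderiv^^k) (rpoly (PP (Qp a n) x))"
    unfolding rderivs_diff rderivs_sum rderivs_cmult .
  also have "\<dots> = 0"
    using degree_PP_less[of "Qp a n" x] n_pos assms by (intro rderivs_rpoly_zero) (simp add: degree_Qp)
  finally show ?thesis by simp
qed


lemma core: "\<forall>\<beta>. (\<forall>\<mu><n. (\<Sum>i=1..n. \<beta> i * (rderiv^^(n+\<mu>)) (rz^(n-i) * X)) = 0) \<longrightarrow> (\<forall>i\<in>{1..n}. \<beta> i = 0)"
proof -
  have w: "\<forall>\<beta>. (\<forall>\<mu><n. (\<Sum>i=1..n. \<beta> i * (rderiv^^\<mu>) ((rderiv^^n) (rz^(n-i) * X))) = 0) \<longrightarrow> (\<forall>i\<in>{1..n}. \<beta> i = 0)"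
    by (rule wronski) (rule indep)
  have e: "(rderiv^^\<mu>) ((rderiv^^n) r) = (rderiv^^(n+\<mu>)) r" for \<mu> r
    by (simp add: funpow_add add.commute[of n])
  show ?thesis using w unfolding e .
qed

end

theorem corollary1:
  fixes n :: nat and x :: "nat \<Rightarrow> real" and a :: "nat \<Rightarrow> real"
    and X :: "real poly fract"
  assumes n_pos: "n \<ge> 1"
    and recur: "\<forall>t. x (t + n) = (\<Sum>i=1..n. a i * x (t + n - i))"
    and minimal: "\<forall>m<n. \<not> (\<exists>c :: nat \<Rightarrow> real.
                       \<forall>t. x (t + m) = (\<Sum>i=1..m. c i * x (t + m - i)))"
    and X_expansion: "\<exists>R. \<forall>z::real. R < \<bar>z\<bar> \<longrightarrow>
                       (\<lambda>t. x t / z ^ (t + 1)) sums reval X z"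
  shows "vec_space.rank (n + 1)
           (mat (n + 1) (n + 1) (\<lambda>(\<mu>, j). (rderiv ^^ (n + \<mu>)) (rz ^ (n - j) * X))) = n
       \<and> (\<forall>\<alpha> :: nat \<Rightarrow> real poly fract.
            (\<forall>\<mu>\<le>n. (rderiv ^^ (n + \<mu>)) (rz ^ n * X)
                    = (\<Sum>i=1..n. \<alpha> i * (rderiv ^^ (n + \<mu>)) (rz ^ (n - i) * X)))
            \<longleftrightarrow> (\<forall>i\<in>{1..n}. \<alpha> i = rconst (a i)))"
proof -
  obtain Z where Z: "infinite Z" "\<forall>z\<in>Z. z \<noteq> 0 \<and> poly (Qp a n) z \<noteq> 0 \<and> (\<lambda>t. x t / z ^ (t + 1)) sums reval X z"
    using inf_Z[OF X_expansion, of a n] by blast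
  note core = core[OF n_pos recur minimal Z]
  note relA = relA[OF n_pos recur minimal Z]
  define G where "G k = rz ^ (n - k) * X" for k
  have uniq: "(\<forall>\<mu>\<le>n. (rderiv ^^ (n + \<mu>)) (rz ^ n * X)
                    = (\<Sum>i=1..n. \<alpha> i * (rderiv ^^ (n + \<mu>)) (rz ^ (n - i) * X)))
            \<longleftrightarrow> (\<forall>i\<in>{1..n}. \<alpha> i = rconst (a i))" for \<alpha>
  proof
    assume h: "\<forall>\<mu>\<le>n. (rderiv ^^ (n + \<mu>)) (rz ^ n * X)
                    = (\<Sum>i=1..n. \<alpha> i * (rderiv ^^ (n + \<mu>)) (rz ^ (n - i) * X))"
    have "(\<Sum>i=1..n. (\<alpha> i - rconst (a i)) * (rderiv ^^ (n + \<mu>)) (rz ^ (n - i) * X)) = 0" if "\<mu> < n" for \<mu>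
    proof -
      have "(\<Sum>i=1..n. (\<alpha> i - rconst (a i)) * (rderiv ^^ (n + \<mu>)) (rz ^ (n - i) * X))
          = (\<Sum>i=1..n. \<alpha> i * (rderiv ^^ (n + \<mu>)) (rz ^ (n - i) * X))
            - (\<Sum>i=1..n. rconst (a i) * (rderiv ^^ (n + \<mu>)) (rz ^ (n - i) * X))"
        by (simp add: algebra_simps sum_subtractf)
      also have "\<dots> = 0" using h that relA[of "n + \<mu>"] by simp
      finally show ?thesis .
    qed
    hence "\<forall>i\<in>{1..n}. \<alpha> i - rconst (a i) = 0" using core[rule_format, of "\<lambda>i. \<alpha> i - rconst (a i)"] by blast
    thus "\<forall>i\<in>{1..n}. \<alpha> i = rconst (a i)" by simp
  next
    assume h: "\<forall>i\<in>{1..n}. \<alpha> i = rconst (a i)"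
    show "\<forall>\<mu>\<le>n. (rderiv ^^ (n + \<mu>)) (rz ^ n * X)
                    = (\<Sum>i=1..n. \<alpha> i * (rderiv ^^ (n + \<mu>)) (rz ^ (n - i) * X))"
      using relA h by simp
  qed
  define M where "M = mat (n + 1) (n + 1) (\<lambda>(\<mu>, j). (rderiv ^^ (n + \<mu>)) (rz ^ (n - j) * X))"
  define M' where "M' = mat (n + 1) n (\<lambda>(\<mu>, j). (rderiv ^^ (n + \<mu>)) (rz ^ (n - (j + 1)) * X))"
  interpret V: vec_space "TYPE(real poly fract)" "n + 1" .
  have Mc: "M \<in> carrier_mat (n + 1) (n + 1)" by (simp add: M_def)
  have M'c: "M' \<in> carrier_mat (n + 1) n" by (simp add: M'_def)
  define w where "w = vec (n + 1) (\<lambda>j. if j = 0 then 1 else - rconst (a j))"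
  have wc: "w \<in> carrier_vec (n + 1)" by (simp add: w_def)
  have wnz: "w \<noteq> 0\<^sub>v (n + 1)"
  proof
    assume "w = 0\<^sub>v (n + 1)"
    hence "w $ 0 = 0" by simp
    thus False by (simp add: w_def)
  qed
  have Mw: "M *\<^sub>v w = 0\<^sub>v (n + 1)"
  proof (rule eq_vecI)
    show "dim_vec (M *\<^sub>v w) = dim_vec (0\<^sub>v (n + 1))" by (simp add: M_def)
    fix \<mu> assume "\<mu> < dim_vec (0\<^sub>v (n + 1))"
    hence \<mu>: "\<mu> < n + 1" by simp
    have "(M *\<^sub>v w) $ \<mu> = (\<Sum>j = 0..<Suc n. (rderiv ^^ (n + \<mu>)) (rz ^ (n - j) * X) * w $ j)"
      using \<mu> by (simp add: M_def scalar_prod_def w_def)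
    also have "\<dots> = (rderiv ^^ (n + \<mu>)) (rz ^ n * X) +
        (\<Sum>j = 0..<n. (rderiv ^^ (n + \<mu>)) (rz ^ (n - Suc j) * X) * w $ Suc j)"
      by (subst sum.atLeast0_lessThan_Suc_shift) (simp add: w_def)
    also have "(\<Sum>j = 0..<n. (rderiv ^^ (n + \<mu>)) (rz ^ (n - Suc j) * X) * w $ Suc j)
        = - (\<Sum>i=1..n. rconst (a i) * (rderiv ^^ (n + \<mu>)) (rz ^ (n - i) * X))"
      unfolding sum_negf[symmetric]
      by (rule sum.reindex_bij_witness[of _ "\<lambda>i. i - 1" "\<lambda>j. Suc j"]) (auto simp: w_def mult.commute)
    also have "(rderiv ^^ (n + \<mu>)) (rz ^ n * X) + - (\<Sum>i=1..n. rconst (a i) * (rderiv ^^ (n + \<mu>)) (rz ^ (n - i) * X)) = 0"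
      using relA[of "n + \<mu>"] by simp
    finally show "(M *\<^sub>v w) $ \<mu> = 0\<^sub>v (n + 1) $ \<mu>" using \<mu> by simp
  qed
  have "det M = 0" using det_0_iff_vec_prod_zero_field[OF Mc] wc wnz Mw by blast
  hence up: "V.rank M < n + 1" using V.det_zero_low_rank[OF Mc] by blast
  have M'kernel: "v = 0\<^sub>v n" if v: "v \<in> carrier_vec n" "M' *\<^sub>v v = 0\<^sub>v (n + 1)" for v
  proof -
    define \<beta> where "\<beta> i = v $ (i - 1)" for i
    have "(\<Sum>i=1..n. \<beta> i * (rderiv^^(n+\<mu>)) (rz^(n-i) * X)) = 0" if \<mu>: "\<mu> < n" for \<mu>
    proof -
      have "(\<Sum>i=1..n. \<beta> i * (rderiv^^(n+\<mu>)) (rz^(n-i) * X))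
          = (\<Sum>j = 0..<n. (rderiv ^^ (n + \<mu>)) (rz ^ (n - (j + 1)) * X) * v $ j)"
        by (rule sum.reindex_bij_witness[of _ "\<lambda>j. Suc j" "\<lambda>i. i - 1"]) (auto simp: \<beta>_def mult.commute)
      also have "\<dots> = (M' *\<^sub>v v) $ \<mu>" using \<mu> v(1) by (simp add: M'_def scalar_prod_def)
      also have "\<dots> = (0\<^sub>v (n + 1)) $ \<mu>" by (simp only: v(2))
      also have "\<dots> = 0" using \<mu> by simp
      finally show ?thesis .
    qed
    hence "\<forall>i\<in>{1..n}. \<beta> i = 0" using core[rule_format, of \<beta>] by blast
    hence "v $ j = 0" if "j < n" for j
    proof -
      have "\<beta> (Suc j) = 0" using \<open>\<forall>i\<in>{1..n}. \<beta> i = 0\<close> that by simp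
      thus ?thesis by (simp add: \<beta>_def)
    qed
    thus ?thesis using v(1) by (intro eq_vecI) auto
  qed
  have dM: "dim_col M = n + 1" by (simp add: M_def)
  have dM': "dim_col M' = n" by (simp add: M'_def)
  have colM': "col M' j $ \<mu> = (rderiv^^(n+\<mu>)) (rz^(n-(j+1)) * X)" if "j < n" "\<mu> < n + 1" for j \<mu>
    using that unfolding M'_def by simp
  have colM: "col M' j = col M (j + 1)" if "j < n" for j
    using that unfolding M'_def M_def by (intro eq_vecI) auto
  have dist: "distinct (cols M')"
  proof (rule ccontr)
    assume "\<not> distinct (cols M')"
    hence "\<exists>i<n. \<exists>j<n. i \<noteq> j \<and> col M' i = col M' j"
      by (simp add: distinct_conv_nth dM')
    then obtain i j where ij: "i \<noteq> j" "i < n" "j < n" and cij: "col M' i = col M' j"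
      by blast
    have colEq: "(rderiv^^(n+\<mu>)) (rz^(n-(i+1)) * X) = (rderiv^^(n+\<mu>)) (rz^(n-(j+1)) * X)" if "\<mu> < n + 1" for \<mu>
      using colM'[of i \<mu>] colM'[of j \<mu>] cij ij that by simp
    define \<beta> where "\<beta> k = (if k = i + 1 then 1 else 0) - (if k = j + 1 then 1 else (0::real poly fract))" for k
    have "(\<Sum>k=1..n. \<beta> k * (rderiv^^(n+\<mu>)) (rz^(n-k) * X)) = 0" if "\<mu> < n" for \<mu>
    proof -
      have "(\<Sum>k=1..n. \<beta> k * (rderiv^^(n+\<mu>)) (rz^(n-k) * X))
          = (\<Sum>k=1..n. if k = i + 1 then (rderiv^^(n+\<mu>)) (rz^(n-k) * X) else 0)
          - (\<Sum>k=1..n. if k = j + 1 then (rderiv^^(n+\<mu>)) (rz^(n-k) * X) else 0)"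
        unfolding sum_subtractf[symmetric] by (rule sum.cong) (auto simp: \<beta>_def)
      also have "\<dots> = (rderiv^^(n+\<mu>)) (rz^(n-(i+1)) * X) - (rderiv^^(n+\<mu>)) (rz^(n-(j+1)) * X)"
        using ij by (simp add: sum.delta')
      also have "\<dots> = 0" using colEq[of \<mu>] that by simp
      finally show ?thesis .
    qed
    hence "\<forall>k\<in>{1..n}. \<beta> k = 0" using core[rule_format, of \<beta>] by blast
    hence "\<beta> (i + 1) = 0" using ij by simp
    thus False using ij by (simp add: \<beta>_def)
  qed
  have indpt: "V.lin_indpt (set (cols M'))"
  proof
    assume "V.lin_dep (set (cols M'))"
    then obtain v where "v \<in> carrier_vec n" "v \<noteq> 0\<^sub>v n" "M' *\<^sub>v v = 0\<^sub>v (n + 1)"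
      using V.lin_depE[OF M'c _ dist] by blast
    thus False using M'kernel by blast
  qed
  have sub: "set (cols M') \<subseteq> set (cols M)"
  proof
    fix c assume "c \<in> set (cols M')"
    then obtain j where j: "j < length (cols M')" "c = cols M' ! j" by (auto simp: in_set_conv_nth)
    hence j': "j < n" "c = col M' j" using dM' by auto
    hence "c = cols M ! (j + 1)" using colM dM by simp
    moreover have "j + 1 < length (cols M)" using j' dM by simp
    ultimately show "c \<in> set (cols M)" by (metis nth_mem)
  qed
  have "card (set (cols M')) = n" using distinct_card[OF dist] dM' by simp
  hence low: "n \<le> V.rank M" using V.rank_ge_card_indpt[OF Mc sub indpt] by simp
  have "V.rank M = n" using up low by simp
  hence "vec_space.rank (n + 1)
           (mat (n + 1) (n + 1) (\<lambda>(\<mu>, j). (rderiv ^^ (n + \<mu>)) (rz ^ (n - j) * X))) = n"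
    unfolding M_def .
  thus ?thesis using uniq by blast
qed

end
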